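(* Let $n\ge2$ and let $A=(a_{ij})$ be a real $n\times n$ matrix, and $q>0$. Then $$|A_q|=\frac{|(A^1_1)_q|\,|(A^n_n)_q|-q^{\,n-1}\,|(A^1_n)_q|\,|(A^n_1)_q|}{|(A^{1n}_{1n})_q|},$$ provided $|(A^{1n}_{1n})_q|\ne0$.
   Context: $|\cdot|$ denotes the determinant, and the determinant of the empty $0\times0$ matrix is $1$. For an $m\times m$ matrix $M=(m_{ij})$ and $q>0$, $M_q=(q^{(i-j)^2/2}m_{ij})_{i,j=1}^m$, where indices are always the positions $1,\dots,m$ in $M$. $A^i_j$ denotes the $(n-1)\times(n-1)$ matrix obtained from $A$ by deleting row $i$ and column $j$ (reindexed from $1$), and $A^{1n}_{1n}$ the $(n-2)\times(n-2)$ matrix obtained by deleting rows $1,n$ and columns $1,n$. *)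

theory Defs
  imports "Jordan_Normal_Form.Determinant"
begin

text \<open>The q-twisted matrix M_q = (q^((i-j)^2/2) m_ij). Indices are 0-based here,
  which does not matter since only the difference i-j enters.\<close>
definition q_mat :: "real \<Rightarrow> real mat \<Rightarrow> real mat" where
  "q_mat q M = mat (dim_row M) (dim_col M)
     (\<lambda>(i,j). q powr ((real i - real j)^2 / 2) * M $$ (i,j))"

end

theory Submission
  imports Defs "Jordan_Normal_Form.Char_Poly"
begin

lemma det_single_col:
  assumes A: "(A :: 'a :: comm_ring_1 mat) \<in> carrier_mat n n" and j: "j < n" and i: "i < n"
    and z: "\<And>k. k < n \<Longrightarrow> k \<noteq> i \<Longrightarrow> A $$ (k,j) = 0"
  shows "det A = A $$ (i,j) * cofactor A i j"
proof -
  have "det A = (\<Sum>k<n. A $$ (k,j) * cofactor A k j)" by (rule laplace_expansion_column[OF A j])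
  also have "\<dots> = (\<Sum>k\<in>{i}. A $$ (k,j) * cofactor A k j)"
    by (rule sum.mono_neutral_right) (use i z in auto)
  finally show ?thesis by simp
qed

lemma det_two_cols:
  fixes m :: nat
  shows "\<And>P :: 'a :: comm_ring_1 mat. P \<in> carrier_mat (Suc (Suc m)) (Suc (Suc m)) \<Longrightarrow>
    (\<And>i j. i < Suc (Suc m) \<Longrightarrow> 0 < j \<Longrightarrow> j < Suc m \<Longrightarrow> P $$ (i,j) = (if i = j then 1 else 0)) \<Longrightarrow>
    det P = P $$ (0,0) * P $$ (Suc m, Suc m) - P $$ (Suc m, 0) * P $$ (0, Suc m)"
proof (induction m)
  case 0
  have "det P = (\<Sum>k<2. P $$ (k,0) * cofactor P k 0)"
    by (rule laplace_expansion_column) (use 0 in auto)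
  also have "\<dots> = P $$ (0,0) * cofactor P 0 0 + P $$ (1,0) * cofactor P 1 0"
    by (simp add: numeral_2_eq_2)
  also have "cofactor P 0 0 = P $$ (1,1)"
    unfolding cofactor_def using 0(1)
    by (subst det_single[of "mat_delete P 0 0"]) (auto simp: mat_delete_def)
  also have "cofactor P 1 0 = - P $$ (0,1)"
    unfolding cofactor_def using 0(1)
    by (subst det_single[of "mat_delete P 1 0"]) (auto simp: mat_delete_def)
  finally show ?case by simp
next
  case (Suc m)
  let ?n = "Suc (Suc (Suc m))"
  have "det P = P $$ (1,1) * cofactor P 1 1"
    by (rule det_single_col[OF Suc.prems(1)]) (use Suc.prems(2) in auto)
  also have "\<dots> = det (mat_delete P 1 1)" using Suc.prems(2)[of 1 1] by (simp add: cofactor_def)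
  also have "\<dots> = mat_delete P 1 1 $$ (0,0) * mat_delete P 1 1 $$ (Suc m, Suc m)
     - mat_delete P 1 1 $$ (Suc m, 0) * mat_delete P 1 1 $$ (0, Suc m)"
  proof (rule Suc.IH)
    show "mat_delete P 1 1 \<in> carrier_mat (Suc (Suc m)) (Suc (Suc m))"
      using mat_delete_carrier[OF Suc.prems(1)] by simp
    fix i j assume "i < Suc (Suc m)" "0 < j" "j < Suc m"
    then show "mat_delete P 1 1 $$ (i,j) = (if i = j then 1 else 0)"
      using Suc.prems(1) Suc.prems(2)[of "if i < 1 then i else Suc i" "Suc j"]
      by (auto simp: mat_delete_def)
  qed
  also have "\<dots> = P $$ (0,0) * P $$ (Suc (Suc m), Suc (Suc m)) - P $$ (Suc (Suc m), 0) * P $$ (0, Suc (Suc m))"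
    using Suc.prems(1) by (simp add: mat_delete_def)
  finally show ?case .
qed


lemma DJ_nonzero:
  fixes M :: "'a :: idom mat"
  assumes M: "M \<in> carrier_mat n n" and n: "n \<ge> 2" and dM: "det M \<noteq> 0"
  shows "det M * det (mat_delete (mat_delete M (n-1) (n-1)) 0 0) =
    det (mat_delete M 0 0) * det (mat_delete M (n-1) (n-1))
    - det (mat_delete M 0 (n-1)) * det (mat_delete M (n-1) 0)"
proof -
  obtain m where nm: "n = Suc (Suc m)" using n by (metis add_2_eq_Suc le_Suc_ex)
  define adj where "adj = adj_mat M"
  have adjC: "adj \<in> carrier_mat n n" and adjM: "M * adj = det M \<cdot>\<^sub>m 1\<^sub>m n"
    using adj_mat[OF M] unfolding adj_def by auto
  have adjE: "i < n \<Longrightarrow> j < n \<Longrightarrow> adj $$ (i,j) = cofactor M j i" for i j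
    using M unfolding adj_def adj_mat_def by auto
  define N where "N = mat n n (\<lambda>(i,j). if j = 0 then adj $$ (i,0) else if j = n-1 then adj $$ (i,n-1)
     else if i = j then 1 else 0)"
  have NC: "N \<in> carrier_mat n n" unfolding N_def by auto
  have detN: "det N = N $$ (0,0) * N $$ (Suc m, Suc m) - N $$ (Suc m, 0) * N $$ (0, Suc m)"
    by (rule det_two_cols) (use NC nm in \<open>auto simp: N_def\<close>)
  have sq: "(-1::'a)^(k+k) = 1" for k by (simp add: power_add flip: power_mult_distrib)
  have detN2: "det N = det (mat_delete M 0 0) * det (mat_delete M (n-1) (n-1))
    - det (mat_delete M 0 (n-1)) * det (mat_delete M (n-1) 0)"
  proof -
    have "det N = cofactor M 0 0 * cofactor M (n-1) (n-1) - cofactor M 0 (n-1) * cofactor M (n-1) 0"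
      unfolding detN using nm by (simp add: N_def adjE)
    also have "\<dots> = det (mat_delete M 0 0) * det (mat_delete M (n-1) (n-1))
      - ((-1)^((n-1)+(n-1))) * (det (mat_delete M 0 (n-1)) * det (mat_delete M (n-1) 0))"
      unfolding cofactor_def by (simp add: sq power_add)
    finally show ?thesis by (simp add: sq)
  qed
  define P where "P = M * N"
  have PC: "P \<in> carrier_mat n n" unfolding P_def using M NC by auto
  have Pent: "P $$ (i,j) = (if j = 0 then (if i = 0 then det M else 0) else if j = n-1 then
      (if i = n-1 then det M else 0) else M $$ (i,j))" if ij: "i < n" "j < n" for i j
  proof -
    have P1: "P $$ (i,j) = row M i \<bullet> col N j" unfolding P_def using M NC ij by auto
    show ?thesis
    proof (cases "j = 0 \<or> j = n-1")
      case True
      then have "col N j = col adj j" using NC adjC ij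
        by (intro eq_vecI) (auto simp: N_def)
      then have "P $$ (i,j) = (M * adj) $$ (i,j)" using P1 M adjC ij by auto
      also have "\<dots> = (if i = j then det M else 0)" unfolding adjM using ij by auto
      finally show ?thesis using True nm by auto
    next
      case False
      have "row M i \<bullet> col N j = (\<Sum>k\<in>{0..<n}. M $$ (i,k) * N $$ (k,j))"
        unfolding scalar_prod_def using M NC ij by auto
      also have "\<dots> = (\<Sum>k\<in>{j}. M $$ (i,k) * N $$ (k,j))"
        by (rule sum.mono_neutral_right) (use ij False in \<open>auto simp: N_def\<close>)
      also have "\<dots> = M $$ (i,j)" using ij False by (simp add: N_def)
      finally show ?thesis using P1 False by auto
    qed
  qed
  have "det P = P $$ (0,0) * cofactor P 0 0"
    by (rule det_single_col[OF PC]) (use nm Pent in auto)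
  also have "\<dots> = det M * det (mat_delete P 0 0)" using nm Pent by (simp add: cofactor_def)
  finally have dP1: "det P = det M * det (mat_delete P 0 0)" .
  define Q where "Q = mat_delete P 0 0"
  have QC: "Q \<in> carrier_mat (Suc m) (Suc m)" unfolding Q_def using mat_delete_carrier[OF PC] nm by auto
  have Qent: "i < Suc m \<Longrightarrow> j < Suc m \<Longrightarrow> Q $$ (i,j) = P $$ (Suc i, Suc j)" for i j
    unfolding Q_def mat_delete_def using PC nm by auto
  have "det Q = Q $$ (m,m) * cofactor Q m m"
    by (rule det_single_col[OF QC]) (use nm Pent Qent in auto)
  also have "\<dots> = det M * det (mat_delete Q m m)" using nm Pent Qent by (simp add: cofactor_def sq)
  finally have dQ: "det Q = det M * det (mat_delete Q m m)" .
  have QK: "mat_delete Q m m = mat_delete (mat_delete M (n-1) (n-1)) 0 0"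
    by (rule eq_matI) (use QC M nm Qent Pent in \<open>auto simp: mat_delete_def\<close>)
  have "det M * det N = det M * (det M * det (mat_delete (mat_delete M (n-1) (n-1)) 0 0))"
    using det_mult[OF M NC] dP1 dQ QK unfolding P_def Q_def by (metis mult.commute)
  then have "det N = det M * det (mat_delete (mat_delete M (n-1) (n-1)) 0 0)" using dM by simp
  then show ?thesis using detN2 by simp
qed


lemma map_mat_delete: "map_mat f (mat_delete A i j) = mat_delete (map_mat f A) i j"
  by (rule eq_matI) (auto simp: mat_delete_def)

lemma DJ_real:
  fixes M :: "real mat"
  assumes M: "M \<in> carrier_mat n n" and n: "n \<ge> 2"
  shows "det M * det (mat_delete (mat_delete M (n-1) (n-1)) 0 0) =
    det (mat_delete M 0 0) * det (mat_delete M (n-1) (n-1))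
    - det (mat_delete M 0 (n-1)) * det (mat_delete M (n-1) 0)"
proof -
  define Mp where "Mp = char_poly_matrix (-M)"
  have mM: "-M \<in> carrier_mat n n" using M by auto
  have MpC: "Mp \<in> carrier_mat n n" unfolding Mp_def using mM by simp
  have "coeff (det Mp) n = 1" using degree_monic_char_poly[OF mM] unfolding Mp_def char_poly_def by auto
  then have dMp: "det Mp \<noteq> 0" by auto
  note DJ = DJ_nonzero[OF MpC n dMp]
  have hh: "comm_ring_hom (\<lambda>p::real poly. poly p 0)" by unfold_locales auto
  have hM: "map_mat (\<lambda>p. poly p 0) Mp = M"
    by (rule eq_matI) (use M in \<open>auto simp: Mp_def char_poly_matrix_def\<close>)
  have "poly (det Mp * det (mat_delete (mat_delete Mp (n-1) (n-1)) 0 0)) 0 =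
    poly (det (mat_delete Mp 0 0) * det (mat_delete Mp (n-1) (n-1))
    - det (mat_delete Mp 0 (n-1)) * det (mat_delete Mp (n-1) 0)) 0" using DJ by simp
  then show ?thesis
    by (simp only: poly_mult poly_diff flip: comm_ring_hom.hom_det[OF hh] map_mat_delete hM)
qed


lemma det_scale:
  fixes X Y :: "real mat"
  assumes X: "X \<in> carrier_mat m m" and Y: "Y \<in> carrier_mat m m" and f: "\<And>i. f i \<noteq> 0"
    and e: "\<And>i j. i < m \<Longrightarrow> j < m \<Longrightarrow> X $$ (i,j) = c * f i / f j * Y $$ (i,j)"
  shows "det X = c ^ m * det Y"
proof -
  have "det X = (\<Sum>p\<in>{p. p permutes {0..<m}}. signof p * (\<Prod>i = 0..<m. X $$ (i, p i)))"
    by (rule det_def'[OF X])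
  also have "\<dots> = (\<Sum>p\<in>{p. p permutes {0..<m}}. c ^ m * (signof p * (\<Prod>i = 0..<m. Y $$ (i, p i))))"
  proof (rule sum.cong[OF refl])
    fix p assume "p \<in> {p. p permutes {0..<m}}"
    then have p: "p permutes {0..<m}" by simp
    have pi: "i < m \<Longrightarrow> p i < m" for i using permutes_in_image[OF p] by auto
    have "(\<Prod>i = 0..<m. X $$ (i, p i)) = (\<Prod>i = 0..<m. c * f i / f (p i) * Y $$ (i, p i))"
      by (rule prod.cong[OF refl]) (auto simp: e pi)
    also have "\<dots> = c ^ m * (\<Prod>i = 0..<m. f i) / (\<Prod>i = 0..<m. f (p i)) * (\<Prod>i = 0..<m. Y $$ (i, p i))"
      by (simp add: prod.distrib prod_dividef)
    also have "(\<Prod>i = 0..<m. f (p i)) = (\<Prod>i = 0..<m. f i)"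
      using prod.permute[OF p, of f] by (simp add: comp_def)
    also have "c ^ m * (\<Prod>i = 0..<m. f i) / (\<Prod>i = 0..<m. f i) = c ^ m"
      using f by (simp add: prod_zero_iff)
    finally show "signof p * (\<Prod>i = 0..<m. X $$ (i, p i)) = c ^ m * (signof p * (\<Prod>i = 0..<m. Y $$ (i, p i)))"
      by simp
  qed
  also have "\<dots> = c ^ m * det Y" unfolding det_def'[OF Y] by (simp add: sum_distrib_left)
  finally show ?thesis .
qed

lemma powr_shift1:
  fixes q x y :: real assumes q: "q > 0"
  shows "q powr ((x + 1 - y)^2/2) = q powr (1/2) * q powr x / q powr y * q powr ((x-y)^2/2)"
proof -
  have "q powr (1/2) * q powr x / q powr y * q powr ((x-y)^2/2) = q powr (1/2 + x - y + (x-y)^2/2)"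
    using q by (simp add: powr_add powr_diff)
  also have "1/2 + x - y + (x-y)^2/2 = (x + 1 - y)^2/2" by (simp add: power2_eq_square field_simps)
  finally show ?thesis by simp
qed

lemma powr_shift2:
  fixes q x y :: real assumes q: "q > 0"
  shows "q powr ((x - (y + 1))^2/2) = q powr (1/2) * q powr (-x) / q powr (-y) * q powr ((x-y)^2/2)"
proof -
  have "q powr (1/2 + (-x) - (-y) + (x-y)^2/2) = q powr (1/2) * q powr (-x) / q powr (-y) * q powr ((x-y)^2/2)"
    by (simp only: powr_add powr_diff)
  then have "q powr (1/2) * q powr (-x) / q powr (-y) * q powr ((x-y)^2/2) = q powr (1/2 + (-x) - (-y) + (x-y)^2/2)"
    by simp
  also have "1/2 + (-x) - (-y) + (x-y)^2/2 = (x - (y + 1))^2/2" by (simp add: power2_eq_square field_simps)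
  finally show ?thesis by simp
qed

theorem mainTheorem15:
  fixes A :: "real mat" and n :: nat and q :: real
  assumes "n \<ge> 2" and "A \<in> carrier_mat n n" and "q > 0"
    and "det (q_mat q (mat_delete (mat_delete A (n-1) (n-1)) 0 0)) \<noteq> 0"
  shows "det (q_mat q A) =
    (det (q_mat q (mat_delete A 0 0)) * det (q_mat q (mat_delete A (n-1) (n-1)))
     - q ^ (n - 1) * det (q_mat q (mat_delete A 0 (n-1))) * det (q_mat q (mat_delete A (n-1) 0)))
    / det (q_mat q (mat_delete (mat_delete A (n-1) (n-1)) 0 0))"
proof -
  note n = assms(1) and A = assms(2) and q = assms(3) and dK = assms(4)
  define B where "B = q_mat q A"
  have BC: "B \<in> carrier_mat n n" unfolding B_def q_mat_def using A by auto
  have Bent: "i < n \<Longrightarrow> j < n \<Longrightarrow> B $$ (i,j) = q powr ((real i - real j)^2 / 2) * A $$ (i,j)" for i j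
    unfolding B_def q_mat_def using A by auto
  have e1: "q_mat q (mat_delete A 0 0) = mat_delete B 0 0"
    by (rule eq_matI) (use A BC Bent in \<open>auto simp: q_mat_def mat_delete_def\<close>)
  have e2: "q_mat q (mat_delete A (n-1) (n-1)) = mat_delete B (n-1) (n-1)"
    by (rule eq_matI) (use A BC Bent in \<open>auto simp: q_mat_def mat_delete_def\<close>)
  have e3: "q_mat q (mat_delete (mat_delete A (n-1) (n-1)) 0 0) = mat_delete (mat_delete B (n-1) (n-1)) 0 0"
    by (rule eq_matI) (use A BC Bent in \<open>auto simp: q_mat_def mat_delete_def\<close>)
  define c where "c = q powr (1/2)"
  have cc: "c ^ (n-1) * c ^ (n-1) = q ^ (n-1)"
  proof -
    have "c * c = q" unfolding c_def using q by (simp flip: powr_add)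
    then show ?thesis by (metis power_mult_distrib)
  qed
  have e4: "det (mat_delete B 0 (n-1)) = c ^ (n-1) * det (q_mat q (mat_delete A 0 (n-1)))"
  proof (rule det_scale[where f = "\<lambda>i. q powr (real i)"])
    show "mat_delete B 0 (n-1) \<in> carrier_mat (n-1) (n-1)" using mat_delete_carrier[OF BC] .
    show "q_mat q (mat_delete A 0 (n-1)) \<in> carrier_mat (n-1) (n-1)"
      using A by (auto simp: q_mat_def)
    show "q powr real i \<noteq> 0" for i using q by simp
    fix i j assume ij: "i < n-1" "j < n-1"
    then show "mat_delete B 0 (n-1) $$ (i,j) = c * q powr real i / q powr real j * q_mat q (mat_delete A 0 (n-1)) $$ (i,j)"
      using A BC Bent[of "Suc i" j] powr_shift1[OF q, of "real i" "real j"]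
      by (auto simp: q_mat_def mat_delete_def c_def add.commute)
  qed
  have e5: "det (mat_delete B (n-1) 0) = c ^ (n-1) * det (q_mat q (mat_delete A (n-1) 0))"
  proof (rule det_scale[where f = "\<lambda>i. q powr (- real i)"])
    show "mat_delete B (n-1) 0 \<in> carrier_mat (n-1) (n-1)" using mat_delete_carrier[OF BC] .
    show "q_mat q (mat_delete A (n-1) 0) \<in> carrier_mat (n-1) (n-1)"
      using A by (auto simp: q_mat_def)
    show "q powr (- real i) \<noteq> 0" for i using q by simp
    fix i j assume ij: "i < n-1" "j < n-1"
    then show "mat_delete B (n-1) 0 $$ (i,j) = c * q powr (- real i) / q powr (- real j) * q_mat q (mat_delete A (n-1) 0) $$ (i,j)"
      using A BC Bent[of i "Suc j"] powr_shift2[OF q, of "real i" "real j"]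
      by (auto simp: q_mat_def mat_delete_def c_def add.commute)
  qed
  have DJ: "det B * det (mat_delete (mat_delete B (n-1) (n-1)) 0 0) =
    det (mat_delete B 0 0) * det (mat_delete B (n-1) (n-1))
    - det (mat_delete B 0 (n-1)) * det (mat_delete B (n-1) 0)" by (rule DJ_real[OF BC n])
  have "det B * det (q_mat q (mat_delete (mat_delete A (n-1) (n-1)) 0 0)) =
    det (q_mat q (mat_delete A 0 0)) * det (q_mat q (mat_delete A (n-1) (n-1)))
     - q ^ (n - 1) * det (q_mat q (mat_delete A 0 (n-1))) * det (q_mat q (mat_delete A (n-1) 0))"
    unfolding e1 e2 e3 DJ e4 e5 using cc by simp
  then show ?thesis using dK unfolding B_def by (simp add: eq_divide_eq)
qed

end
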